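(* Let $X$ be a real Hilbert space, let $\alpha_1,\alpha_2\in\mathbb{R}$, let $\beta_1,\beta_2>0$, suppose $\alpha_1+\beta_1>0$ and $\alpha_2+\beta_2>0$, and suppose that either $\tfrac{\beta_1\beta_2}{(\alpha_1+\beta_1)(\alpha_2+\beta_2)}<1$ or $\max\big\{\tfrac{\beta_1}{\alpha_1+\beta_1},\tfrac{\beta_2}{\alpha_2+\beta_2}\big\}=1$. Set $\kappa=(\alpha_1+\beta_1)(\alpha_2+\beta_2)$ and $$\theta=\begin{cases}\dfrac{\beta_1\alpha_2+\beta_2\alpha_1}{\alpha_1\alpha_2+\alpha_1\beta_2+\alpha_2\beta_1},&\text{if }\tfrac{\beta_1\beta_2}{(\alpha_1+\beta_1)(\alpha_2+\beta_2)}<1;\\[2mm] 1,&\text{if }\max\big\{\tfrac{\beta_1}{\alpha_1+\beta_1},\tfrac{\beta_2}{\alpha_2+\beta_2}\big\}=1.\end{cases}$$ Suppose $R_1\colon X\to X$ admits an $(\alpha_1,\beta_1)$-I-N decomposition and $R_2\colon X\to X$ admits an $(\alpha_2,\beta_2)$-I-N decomposition. Then $\theta\in\left]0,+\infty\right[$ and there exists a nonexpansive $N\colon X\to X$ such that $R_2R_1=\kappa(1-\theta)\mathrm{Id}+\kappa\theta N$, i.e., $R_2R_1$ is $\kappa$-scaled $\theta$-conically nonexpansive.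
   Context: For $(\alpha,\beta)\in\mathbb{R}\times[0,\infty[$, an operator $R\colon X\to X$ admits an $(\alpha,\beta)$-I-N (Identity-Nonexpansive) decomposition if there exists a nonexpansive ($1$-Lipschitz) $N\colon X\to X$ with $R=\alpha\mathrm{Id}+\beta N$. *)

theory Defs
  imports "HOL-Analysis.Analysis"
begin

definition nonexpansive :: "('a::metric_space \<Rightarrow> 'a) \<Rightarrow> bool" where
  "nonexpansive N \<longleftrightarrow> (\<forall>x y. dist (N x) (N y) \<le> dist x y)"

definition IN_decomposition :: "real \<Rightarrow> real \<Rightarrow> ('a::real_normed_vector \<Rightarrow> 'a) \<Rightarrow> bool" where
  "IN_decomposition \<alpha> \<beta> R \<longleftrightarrow> (\<exists>N. nonexpansive N \<and> (\<forall>x. R x = \<alpha> *\<^sub>R x + \<beta> *\<^sub>R N x))"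

end

theory Submission imports Defs begin

lemma conic_iff:
  fixes u z :: "'a::real_inner"
  assumes t: "t > 0"
  shows "norm (u - (1/t) *\<^sub>R z) \<le> norm u \<longleftrightarrow> inner z z \<le> 2*t*inner u z"
proof -
  have e: "inner (u - (1/t) *\<^sub>R z) (u - (1/t) *\<^sub>R z) = inner u u - 2*(1/t)*inner u z + (1/t)^2 * inner z z"
    by (simp add: inner_diff inner_commute power2_eq_square algebra_simps)
  have "norm (u - (1/t) *\<^sub>R z) \<le> norm u \<longleftrightarrow> inner (u - (1/t) *\<^sub>R z) (u - (1/t) *\<^sub>R z) \<le> inner u u"
    by (simp add: norm_le)
  also have "\<dots> \<longleftrightarrow> (1/t)^2 * inner z z \<le> 2*(1/t)*inner u z" using e by simp
  also have "\<dots> \<longleftrightarrow> t^2 * ((1/t)^2 * inner z z) \<le> t^2 * (2*(1/t)*inner u z)"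
    using t by (intro mult_le_cancel_left_pos[symmetric]) simp
  also have "\<dots> \<longleftrightarrow> inner z z \<le> 2*t*inner u z"
    using t by (simp add: power2_eq_square field_simps)
  finally show ?thesis .
qed

lemma key:
  fixes t1 t2 P Q D1 D2 C :: real
  assumes t1: "t1 > 0" and t2: "t2 > 0" and t12: "t1*t2 < 1"
    and D1: "D1 \<ge> 0" and D2: "D2 \<ge> 0" and CS: "C^2 \<le> D1*D2"
    and h1: "D1 \<le> 2*t1*P" and h2: "D2 \<le> 2*t2*(Q-C)"
  shows "D1 + 2*C + D2 \<le> 2*((t1+t2-2*t1*t2)/(1-t1*t2))*(P+Q)"
proof -
  define \<theta> where "\<theta> = (t1+t2-2*t1*t2)/(1-t1*t2)"
  define p where "p = t2*(1-t1)^2/(t1*(1-t1*t2))"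
  define r where "r = t1*(1-t2)^2/(t2*(1-t1*t2))"
  have den: "1 - t1*t2 > 0" using t12 by simp
  have p0: "p \<ge> 0" unfolding p_def using t1 t2 den by simp
  have r0: "r \<ge> 0" unfolding r_def using t1 t2 den by simp
  have l1: "\<theta>/t1 = 1 + p" unfolding \<theta>_def p_def using t1 t2 den
    by (simp add: field_simps power2_eq_square; simp add: algebra_simps)
  have l2: "\<theta>/t2 = 1 + r" unfolding \<theta>_def r_def using t1 t2 den
    by (simp add: field_simps power2_eq_square; simp add: algebra_simps)
  have tm: "\<theta>-1 = -((1-t1)*(1-t2)/(1-t1*t2))" unfolding \<theta>_def using den
    by (simp add: field_simps; simp add: algebra_simps)
  have pr: "(\<theta>-1)^2 = p*r" unfolding tm p_def r_def using t1 t2 den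
    by (simp add: power2_eq_square)
  have br: "p*D1 + 2*(\<theta>-1)*C + r*D2 \<ge> 0"
  proof -
    have s0: "p*D1 + r*D2 \<ge> 0" using p0 r0 D1 D2 by simp
    have "(2*\<bar>(\<theta>-1)*C\<bar>)^2 = 4*(\<theta>-1)^2*C^2" by (simp add: power2_eq_square abs_mult algebra_simps)
    also have "\<dots> \<le> 4*(p*r)*(D1*D2)" using pr mult_left_mono[OF CS, of "4*(p*r)"] p0 r0 by (simp add: mult.assoc)
    also have "\<dots> \<le> (p*D1 + r*D2)^2"
    proof -
      have "(p*D1 + r*D2)^2 - 4*(p*r)*(D1*D2) = (p*D1 - r*D2)^2" by (simp add: power2_eq_square algebra_simps)
      thus ?thesis by (metis diff_ge_0_iff_ge zero_le_power2)
    qed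
    finally have "2*\<bar>(\<theta>-1)*C\<bar> \<le> p*D1 + r*D2"
      using s0 by (meson abs_ge_zero power2_le_imp_le)
    moreover have "-\<bar>(\<theta>-1)*C\<bar> \<le> (\<theta>-1)*C" by simp
    moreover have "2*(\<theta>-1)*C = 2*((\<theta>-1)*C)" by simp
    ultimately show ?thesis by linarith
  qed
  have th0: "\<theta> > 0"
  proof -
    have "t1+t2-2*t1*t2 > 0"
    proof -
      have q: "t1*t2 > 0" using t1 t2 by simp
      have a: "(t1+t2)^2 - 4*(t1*t2) = (t1-t2)^2" by (simp add: power2_eq_square algebra_simps)
      have b: "(2*(t1*t2))^2 = 4*(t1*t2)*(t1*t2)" by (simp add: power2_eq_square)
      have c: "4*(t1*t2)*(t1*t2) < 4*(t1*t2)" using mult_strict_left_mono[OF t12 q] by (simp add: mult.assoc)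
      have "(2*(t1*t2))^2 < (t1+t2)^2" using a b c zero_le_power2[of "t1-t2"] by linarith
      moreover have "0 \<le> t1+t2" using t1 t2 by simp
          ultimately have "2*(t1*t2) < t1+t2" by (rule power2_less_imp_less)
      thus ?thesis by simp
    qed
    thus ?thesis unfolding \<theta>_def using den by simp
  qed
  have pe: "p = \<theta>/t1 - 1" using l1 by simp
  have re: "r = \<theta>/t2 - 1" using l2 by simp
  have a1: "(\<theta>/t1)*(2*t1*P - D1) \<ge> 0" using th0 t1 h1 by simp
  have a2: "(\<theta>/t2)*(2*t2*(Q-C) - D2) \<ge> 0" using th0 t2 h2 by simp
  have id: "2*\<theta>*(P+Q) - (D1+2*C+D2) = (\<theta>/t1)*(2*t1*P - D1) + (\<theta>/t2)*(2*t2*(Q-C) - D2) + (p*D1 + 2*(\<theta>-1)*C + r*D2)"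
    unfolding pe re using t1 t2 by (simp add: field_simps)
  show ?thesis using id a1 a2 br unfolding \<theta>_def[symmetric] by linarith
qed
theorem mainTheorem7:
  fixes R1 R2 :: "'a::{real_inner, complete_space} \<Rightarrow> 'a"
    and \<alpha>1 \<alpha>2 \<beta>1 \<beta>2 \<kappa> \<theta> :: real
  assumes "\<beta>1 > 0" and "\<beta>2 > 0"
    and "\<alpha>1 + \<beta>1 > 0" and "\<alpha>2 + \<beta>2 > 0"
    and "\<beta>1 * \<beta>2 / ((\<alpha>1 + \<beta>1) * (\<alpha>2 + \<beta>2)) < 1
         \<or> max (\<beta>1 / (\<alpha>1 + \<beta>1)) (\<beta>2 / (\<alpha>2 + \<beta>2)) = 1"
    and "\<kappa> = (\<alpha>1 + \<beta>1) * (\<alpha>2 + \<beta>2)"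
    and "\<theta> = (if \<beta>1 * \<beta>2 / ((\<alpha>1 + \<beta>1) * (\<alpha>2 + \<beta>2)) < 1
               then (\<beta>1 * \<alpha>2 + \<beta>2 * \<alpha>1) / (\<alpha>1 * \<alpha>2 + \<alpha>1 * \<beta>2 + \<alpha>2 * \<beta>1)
               else 1)"
    and "IN_decomposition \<alpha>1 \<beta>1 R1"
    and "IN_decomposition \<alpha>2 \<beta>2 R2"
  shows "\<theta> > 0 \<and> (\<exists>N. nonexpansive N \<and>
           (\<forall>x. R2 (R1 x) = (\<kappa> * (1 - \<theta>)) *\<^sub>R x + (\<kappa> * \<theta>) *\<^sub>R N x))"
proof -
  obtain N1 where N1: "nonexpansive N1" "\<And>x. R1 x = \<alpha>1 *\<^sub>R x + \<beta>1 *\<^sub>R N1 x"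
    using assms(8) unfolding IN_decomposition_def by blast
  obtain N2 where N2: "nonexpansive N2" "\<And>x. R2 x = \<alpha>2 *\<^sub>R x + \<beta>2 *\<^sub>R N2 x"
    using assms(9) unfolding IN_decomposition_def by blast
  define c1 where "c1 = \<alpha>1 + \<beta>1"
  define c2 where "c2 = \<alpha>2 + \<beta>2"
  define t1 where "t1 = \<beta>1 / c1"
  define t2 where "t2 = \<beta>2 / c2"
  have c1: "c1 > 0" and c2: "c2 > 0" using assms(3,4) c1_def c2_def by auto
  have t1: "t1 > 0" and t2: "t2 > 0" using c1 c2 assms(1,2) t1_def t2_def by auto
  have kap: "\<kappa> = c1 * c2" using assms(6) c1_def c2_def by simp
  have kpos: "\<kappa> > 0" using kap c1 c2 by simp
  have tt: "\<beta>1 * \<beta>2 / ((\<alpha>1 + \<beta>1) * (\<alpha>2 + \<beta>2)) = t1 * t2"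
    unfolding t1_def t2_def c1_def c2_def by simp
  have ne1: "norm (N1 x - N1 y) \<le> norm (x - y)" for x y
    using N1(1) unfolding nonexpansive_def dist_norm by blast
  have ne2: "norm (N2 x - N2 y) \<le> norm (x - y)" for x y
    using N2(1) unfolding nonexpansive_def dist_norm by blast
  define N where "N x = x + (1/\<theta>) *\<^sub>R ((1/\<kappa>) *\<^sub>R R2 (R1 x) - x)" for x
  have thpos: "\<theta> > 0" and nN: "nonexpansive N"
  proof -
    have "\<theta> > 0 \<and> nonexpansive N"
    proof (cases "t1 * t2 < 1")
      case True
      have den: "1 - t1*t2 > 0" using True by simp
      have th: "\<theta> = (t1+t2-2*t1*t2)/(1-t1*t2)"
      proof -
        have "\<theta> = (\<beta>1 * \<alpha>2 + \<beta>2 * \<alpha>1) / (\<alpha>1 * \<alpha>2 + \<alpha>1 * \<beta>2 + \<alpha>2 * \<beta>1)"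
          using assms(7) tt True by simp
        also have "\<dots> = (t1+t2-2*t1*t2)/(1-t1*t2)"
        proof -
          have e1: "t1+t2-2*t1*t2 = (\<beta>1 * \<alpha>2 + \<beta>2 * \<alpha>1)/(c1*c2)"
            unfolding t1_def t2_def using c1 c2 by (simp add: field_simps) (simp add: c1_def c2_def algebra_simps)
          have e2: "1-t1*t2 = (\<alpha>1 * \<alpha>2 + \<alpha>1 * \<beta>2 + \<alpha>2 * \<beta>1)/(c1*c2)"
            unfolding t1_def t2_def using c1 c2 by (simp add: field_simps) (simp add: c1_def c2_def algebra_simps)
          show ?thesis unfolding e1 e2 using c1 c2 by simp
        qed
        finally show ?thesis .
      qed
      have thp: "\<theta> > 0"
      proof -
        have "t1+t2-2*t1*t2 > 0"
        proof -
          have q: "t1*t2 > 0" using t1 t2 by simp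
          have a: "(t1+t2)^2 - 4*(t1*t2) = (t1-t2)^2" by (simp add: power2_eq_square algebra_simps)
          have b: "(2*(t1*t2))^2 = 4*(t1*t2)*(t1*t2)" by (simp add: power2_eq_square)
          have c: "4*(t1*t2)*(t1*t2) < 4*(t1*t2)" using mult_strict_left_mono[OF True q] by (simp add: mult.assoc)
          have "(2*(t1*t2))^2 < (t1+t2)^2" using a b c zero_le_power2[of "t1-t2"] by linarith
          moreover have "0 \<le> t1+t2" using t1 t2 by simp
          ultimately have "2*(t1*t2) < t1+t2" by (rule power2_less_imp_less)
          thus ?thesis by simp
        qed
        thus ?thesis using th den by simp
      qed
      have "nonexpansive N"
        unfolding nonexpansive_def dist_norm
      proof (intro allI)
        fix x y :: 'a
        define u where "u = x - y"
        define e1 where "e1 = N1 x - N1 y"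
        define W where "W = R1 x - R1 y"
        define e2 where "e2 = N2 (R1 x) - N2 (R1 y)"
        define V where "V = R2 (R1 x) - R2 (R1 y)"
        define d1 where "d1 = u - (1/c1) *\<^sub>R W"
        define d2 where "d2 = (1/c1) *\<^sub>R W - (1/\<kappa>) *\<^sub>R V"
        have W: "W = \<alpha>1 *\<^sub>R u + \<beta>1 *\<^sub>R e1" unfolding W_def u_def e1_def N1(2)
          by (simp add: algebra_simps)
        have V: "V = \<alpha>2 *\<^sub>R W + \<beta>2 *\<^sub>R e2" unfolding V_def W_def e2_def N2(2)
          by (simp add: algebra_simps)
        have NN: "N x - N y = u - (1/\<theta>) *\<^sub>R (d1 + d2)"
          unfolding N_def d1_def d2_def u_def V_def by (simp add: algebra_simps)
        have h1e: "u - (1/t1) *\<^sub>R d1 = e1"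
        proof -
          have "(1/t1) *\<^sub>R d1 = (1/t1) *\<^sub>R u - ((1/t1)*(1/c1)*\<alpha>1) *\<^sub>R u - ((1/t1)*(1/c1)*\<beta>1) *\<^sub>R e1"
            unfolding d1_def W by (simp add: algebra_simps)
          also have "\<dots> = (1/t1 - (1/t1)*(1/c1)*\<alpha>1) *\<^sub>R u - e1"
            using t1 c1 assms(1) unfolding t1_def by (simp add: algebra_simps)
          also have "(1/t1 - (1/t1)*(1/c1)*\<alpha>1) = 1"
            using t1 c1 assms(1) unfolding t1_def c1_def by (simp add: field_simps)
          finally show ?thesis by simp
        qed
        have h2e: "(u - d1) - (1/t2) *\<^sub>R d2 = (1/c1) *\<^sub>R e2"
        proof -
          have ud: "u - d1 = (1/c1) *\<^sub>R W" unfolding d1_def by simp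
          have "(1/t2) *\<^sub>R d2 = ((1/t2)*(1/c1)) *\<^sub>R W - ((1/t2)*(1/\<kappa>)*\<alpha>2) *\<^sub>R W - ((1/t2)*(1/\<kappa>)*\<beta>2) *\<^sub>R e2"
            unfolding d2_def V by (simp add: algebra_simps)
          also have "((1/t2)*(1/\<kappa>)*\<beta>2) = 1/c1"
            using t2 c1 c2 assms(2) unfolding t2_def kap by (simp add: field_simps)
          also have "((1/t2)*(1/c1)) *\<^sub>R W - ((1/t2)*(1/\<kappa>)*\<alpha>2) *\<^sub>R W = ((1/t2)*(1/c1) - (1/t2)*(1/\<kappa>)*\<alpha>2) *\<^sub>R W"
            by (simp add: algebra_simps)
          also have "((1/t2)*(1/c1) - (1/t2)*(1/\<kappa>)*\<alpha>2) = 1/c1"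
          proof -
            have "(1/t2)*(1/c1) - (1/t2)*(1/\<kappa>)*\<alpha>2 = (c2 - \<alpha>2)/(\<beta>2*c1)"
              unfolding t2_def kap using c1 c2 assms(2) by (simp add: field_simps)
            also have "c2 - \<alpha>2 = \<beta>2" unfolding c2_def by simp
            finally show ?thesis using assms(2) by simp
          qed
          finally show ?thesis using ud by simp
        qed
        have i1: "inner d1 d1 \<le> 2*t1*inner u d1"
          using conic_iff[OF t1, of u d1] h1e ne1[of x y] e1_def u_def by simp
        have i2: "inner d2 d2 \<le> 2*t2*inner (u - d1) d2"
        proof -
          have "norm ((1/c1) *\<^sub>R e2) \<le> norm ((1/c1) *\<^sub>R W)"
            using ne2[of "R1 x" "R1 y"] c1 e2_def W_def by (simp add: divide_right_mono)
          thus ?thesis using conic_iff[OF t2, of "u - d1" d2] h2e d1_def by simp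
        qed
        have i2': "inner d2 d2 \<le> 2*t2*(inner u d2 - inner d1 d2)"
          using i2 by (simp add: inner_diff_left)
        have CS: "(inner d1 d2)^2 \<le> inner d1 d1 * inner d2 d2" by (rule Cauchy_Schwarz_ineq)
        have K: "inner d1 d1 + 2*inner d1 d2 + inner d2 d2 \<le> 2*\<theta>*(inner u d1 + inner u d2)"
          using key[OF t1 t2 True _ _ CS i1 i2'] th by simp
        have "inner (d1+d2) (d1+d2) \<le> 2*\<theta>*inner u (d1+d2)"
          using K by (simp add: inner_add inner_commute)
        hence "norm (u - (1/\<theta>) *\<^sub>R (d1 + d2)) \<le> norm u" using conic_iff[OF thp] by blast
        thus "norm (N x - N y) \<le> norm (x - y)" using NN u_def by simp
      qed
      thus ?thesis using thp by simp
    next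
      case False
      have m: "max t1 t2 = 1" using assms(5) tt False unfolding t1_def t2_def c1_def c2_def by argo
      have th: "\<theta> = 1" using assms(7) tt False by simp
      have le: "t1 \<le> 1" "t2 \<le> 1" using m by (auto simp: max_def split: if_splits)
      have t11: "t1 = 1"
      proof (rule ccontr)
        assume "t1 \<noteq> 1" hence "t1 < 1" using le by simp
        hence "t1*t2 < 1*t2" using t2 by (rule mult_strict_right_mono)
        thus False using False le by linarith
      qed
      have t21: "t2 = 1"
      proof (rule ccontr)
        assume "t2 \<noteq> 1" hence "t2 < 1" using le by simp
        hence "t1*t2 < t1*1" using t1 by (rule mult_strict_left_mono)
        thus False using False le by linarith
      qed
      have a1: "\<alpha>1 = 0" using t11 c1 unfolding t1_def c1_def by (simp add: field_simps)
      have a2: "\<alpha>2 = 0" using t21 c2 unfolding t2_def c2_def by (simp add: field_simps)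
      have k: "\<kappa> = \<beta>1 * \<beta>2" using kap a1 a2 c1_def c2_def by simp
      have NF: "N x = (1/\<beta>1) *\<^sub>R N2 (\<beta>1 *\<^sub>R N1 x)" for x
        unfolding N_def th N1(2) N2(2) a1 a2 k using assms(1,2) by simp
      have "nonexpansive N"
        unfolding nonexpansive_def dist_norm
      proof (intro allI)
        fix x y :: 'a
        have "norm (N x - N y) = (1/\<beta>1) * norm (N2 (\<beta>1 *\<^sub>R N1 x) - N2 (\<beta>1 *\<^sub>R N1 y))"
          unfolding NF using assms(1) by (simp flip: scaleR_diff_right)
        also have "\<dots> \<le> (1/\<beta>1) * norm (\<beta>1 *\<^sub>R N1 x - \<beta>1 *\<^sub>R N1 y)"
          using ne2[of "\<beta>1 *\<^sub>R N1 x" "\<beta>1 *\<^sub>R N1 y"] assms(1) by (simp add: divide_right_mono)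
        also have "\<dots> = norm (N1 x - N1 y)" using assms(1) by (simp flip: scaleR_diff_right)
        also have "\<dots> \<le> norm (x - y)" by (rule ne1)
        finally show "norm (N x - N y) \<le> norm (x - y)" .
      qed
      thus ?thesis using th by simp
    qed
    thus "\<theta> > 0" "nonexpansive N" by auto
  qed
  have "R2 (R1 x) = (\<kappa> * (1 - \<theta>)) *\<^sub>R x + (\<kappa> * \<theta>) *\<^sub>R N x" for x
  proof -
    have "(\<kappa> * \<theta>) *\<^sub>R N x = (\<kappa> * \<theta>) *\<^sub>R x + ((\<kappa> * \<theta>) * (1/\<theta>)) *\<^sub>R ((1/\<kappa>) *\<^sub>R R2 (R1 x) - x)"
      unfolding N_def by (simp add: scaleR_add_right)
    also have "(\<kappa> * \<theta>) * (1/\<theta>) = \<kappa>" using thpos by simp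
    also have "\<kappa> *\<^sub>R ((1/\<kappa>) *\<^sub>R R2 (R1 x) - x) = R2 (R1 x) - \<kappa> *\<^sub>R x"
      using kpos by (simp add: scaleR_diff_right)
    finally have "(\<kappa> * \<theta>) *\<^sub>R N x = (\<kappa> * \<theta>) *\<^sub>R x + R2 (R1 x) - \<kappa> *\<^sub>R x" by simp
    thus ?thesis by (simp add: algebra_simps)
  qed
  thus ?thesis using thpos nN by blast
qed

end
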